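(* Let $U$ be a convex $2n$-gon with distinct vertices $U_1,\dots,U_{2n}$ in counterclockwise order, centered at the origin ($U_{i+n}=-U_i$, indices modulo $2n$), and let $P$ be a convex polygon with nonempty interior whose vertex list is $P_1,\dots,P_{2n}$ (consecutive entries may coincide) such that corresponding sides and diagonals are parallel: $P_{i+1}-P_i=\lambda_{i+\frac12}(U_{i+1}-U_i)$ with $\lambda_{i+\frac12}\ge0$, and $P_i-P_{i+n}$ is parallel to $U_i-U_{i+n}$, for all $i$. Then, in the Minkowski plane $(\mathbb{R}^2,U)$, $P$ has constant $U$-width.
   Context: The Minkowski plane $(\mathbb{R}^2,U)$ is $\mathbb{R}^2$ with the norm whose unit ball is $U$. The dual norm is identified with $\|v\|=\sup\{[u,v]:u\in U\}$, where $[x,y]$ is the determinant of the matrix with columns $x,y$; its unit ball is the dual unit ball. For $v$ in the dual unit circle ($\|v\|=1$), the support function of $P$ is $h(P)(v)=\sup\{[p,v]:p\in P\}$ and the width of $P$ in direction $v$ is $w(P)(v)=h(P)(v)+h(P)(-v)$. $P$ has constant $U$-width if $w(P)(v)$ does not depend on $v$. *)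

theory Defs
  imports "HOL-Analysis.Analysis"
begin

text \<open>Points of the plane are pairs of reals. [x,y] is the determinant of the matrix with columns x, y.\<close>
definition det2 :: "real \<times> real \<Rightarrow> real \<times> real \<Rightarrow> real" where
  "det2 x y = fst x * snd y - snd x * fst y"

definition dual_norm :: "(real \<times> real) set \<Rightarrow> real \<times> real \<Rightarrow> real" where
  "dual_norm K v = Sup {det2 u v | u. u \<in> K}"

definition support_fun :: "(real \<times> real) set \<Rightarrow> real \<times> real \<Rightarrow> real" where
  "support_fun P v = Sup {det2 p v | p. p \<in> P}"

definition width :: "(real \<times> real) set \<Rightarrow> real \<times> real \<Rightarrow> real" where
  "width P v = support_fun P v + support_fun P (- v)"

definition constant_width :: "(real \<times> real) set \<Rightarrow> (real \<times> real) set \<Rightarrow> bool" where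
  "constant_width K P \<longleftrightarrow> (\<exists>c. \<forall>v. dual_norm K v = 1 \<longrightarrow> width P v = c)"

end

theory Submission imports Defs begin

lemma det2_diff_left: "det2 (x - y) v = det2 x v - det2 y v"
  by (simp add: det2_def algebra_simps)
lemma det2_add_left: "det2 (x + y) v = det2 x v + det2 y v"
  by (simp add: det2_def algebra_simps)
lemma det2_scale_left: "det2 (c *\<^sub>R x) v = c * det2 x v"
  by (simp add: det2_def algebra_simps)
lemma det2_neg_right: "det2 x (- v) = - det2 x v"
  by (simp add: det2_def algebra_simps)
lemma det2_neg_left: "det2 (- x) v = - det2 x v"
  by (simp add: det2_def algebra_simps)
lemma det2_self: "det2 x x = 0"
  by (simp add: det2_def algebra_simps)
lemma det2_swap: "det2 x y = - det2 y x"
  by (simp add: det2_def algebra_simps)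

lemma sup_hull:
  assumes "s0 \<in> S" "\<forall>s\<in>S. det2 s v \<le> det2 s0 v"
  shows "Sup {det2 p v | p. p \<in> convex hull S} = det2 s0 v"
proof -
  have "convex hull S \<subseteq> {x. inner (snd v, - fst v) x \<le> det2 s0 v}"
    apply (rule hull_minimal)
    using assms apply (auto simp: det2_def algebra_simps)[1]
    by (rule convex_halfspace_le)
  hence "\<forall>p\<in>convex hull S. det2 p v \<le> det2 s0 v"
    by (auto simp: det2_def algebra_simps)
  moreover have "s0 \<in> convex hull S" using assms(1) by (rule hull_inc)
  ultimately show ?thesis by (intro cSup_eq_maximum) blast+
qed

lemma par_ex: assumes "det2 a b = 0" "b \<noteq> 0" shows "\<exists>c. a = c *\<^sub>R b"
proof (cases "fst b = 0")
  case False
  show ?thesis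
    apply (rule exI[of _ "fst a / fst b"])
    using assms False by (auto simp: det2_def prod_eq_iff field_simps)
next
  case True
  then have "snd b \<noteq> 0" using assms(2) by (simp add: prod_eq_iff)
  then show ?thesis
    apply (intro exI[of _ "snd a / snd b"])
    using assms True by (auto simp: det2_def prod_eq_iff field_simps)
qed

lemma per_mod: assumes "\<forall>i. f (i + N) = f i" shows "f i = f (i mod (N::nat))"
proof -
  have "f (j + N*q) = f j" for j q
  proof (induction q)
    case (Suc q)
    have "j + N * Suc q = (j + N*q) + N" by simp
    then show ?case using Suc assms by metis
  qed simp
  from this[of "i mod N" "i div N"] show ?thesis by (simp add: add.commute mult.commute)
qed

lemma mod_neq: assumes "0 < d" "d < (N::nat)" shows "(a + d) mod N \<noteq> a mod N"
proof
  assume "(a + d) mod N = a mod N"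
  hence "N dvd d" using mod_eq_dvd_iff_nat[of a "a+d" N] by simp
  with assms show False by (auto dest: dvd_imp_le)
qed

lemma mono_dec: assumes "\<forall>k<n. g (Suc k) \<le> (g k::real)"
  shows "k \<le> m \<Longrightarrow> m \<le> n \<Longrightarrow> g m \<le> g k"
proof (induction m)
  case 0 then show ?case by simp
next
  case (Suc m)
  show ?case
  proof (cases "k \<le> m")
    case True
    then show ?thesis using Suc assms by (meson Suc_le_lessD dual_order.trans less_or_eq_imp_le)
  next
    case False
    then show ?thesis using Suc by (simp add: le_Suc_eq)
  qed
qed

theorem lemma2p4:
  fixes n :: nat and U P :: "nat \<Rightarrow> real \<times> real" and lam :: "nat \<Rightarrow> real"
  assumes n2: "n \<ge> 2"
    and U_per: "\<forall>i. U (i + 2 * n) = U i"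
    and U_sym: "\<forall>i. U (i + n) = - U i"
    and U_dist: "inj_on U {..<2 * n}"
    and U_ccw: "\<forall>i<2 * n. \<forall>j<2 * n. j \<noteq> i \<and> j \<noteq> Suc i mod (2 * n) \<longrightarrow>
                  det2 (U (Suc i) - U i) (U j - U i) > 0"
    and P_per: "\<forall>i. P (i + 2 * n) = P i"
    and P_vert: "\<forall>i<2 * n. P i extreme_point_of convex hull (P ` {..<2 * n})"
    and P_int: "interior (convex hull (P ` {..<2 * n})) \<noteq> {}"
    and lam_nonneg: "\<forall>i. lam i \<ge> 0"
    and sides: "\<forall>i. P (Suc i) - P i = lam i *\<^sub>R (U (Suc i) - U i)"
    and diags: "\<forall>i. det2 (P i - P (i + n)) (U i - U (i + n)) = 0"
  shows "constant_width (convex hull (U ` {..<2 * n})) (convex hull (P ` {..<2 * n}))"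
proof -
  define N where "N = 2 * n"
  have N4: "N \<ge> 4" using n2 N_def by simp
  have Umod: "U i = U (i mod N)" for i using per_mod[of U N] U_per N_def by blast
  have Pmod: "P i = P (i mod N)" for i using per_mod[of P N] P_per N_def by blast
  have Usym: "U (i + n) = - U i" for i using U_sym by blast
  have ccw: "det2 (U (Suc a) - U a) (U j - U a) > 0"
    if "j mod N \<noteq> a mod N" "j mod N \<noteq> Suc a mod N" for a j
  proof -
    have "det2 (U (Suc (a mod N)) - U (a mod N)) (U (j mod N) - U (a mod N)) > 0"
      using U_ccw[rule_format, of "a mod N" "j mod N"] that N4 N_def
      by (simp add: mod_Suc_eq)
    moreover have "U (Suc (a mod N)) = U (Suc a)"
      using Umod[of "Suc (a mod N)"] Umod[of "Suc a"] by (simp add: mod_Suc_eq)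
    ultimately show ?thesis using Umod[of a] Umod[of j] by simp
  qed
  have ccw0: "det2 (U (Suc a) - U a) (U j - U a) \<ge> 0" for a j
  proof (cases "j mod N = a mod N \<or> j mod N = Suc a mod N")
    case True
    then show ?thesis using Umod[of j] Umod[of a] Umod[of "Suc a"]
      by (auto simp: det2_self det2_def algebra_simps)
  next
    case False
    then show ?thesis using ccw[of j a] by auto
  qed
  have e_sym: "U (Suc (a + n)) - U (a + n) = - (U (Suc a) - U a)" for a
    using Usym[of a] Usym[of "Suc a"] by simp
  have indep: "det2 (U a) (U (Suc a)) > 0" for a
  proof -
    have "(a + n) mod N \<noteq> a mod N" using mod_neq[of n N a] n2 N_def by simp
    moreover have "(Suc a + (n - 1)) mod N \<noteq> Suc a mod N"
      using mod_neq[of "n - 1" N "Suc a"] n2 N_def by simp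
    moreover have "Suc a + (n - 1) = a + n" using n2 by simp
    ultimately have "det2 (U (Suc a) - U a) (U (a + n) - U a) > 0"
      using ccw[of "a + n" a] by simp
    then show ?thesis using Usym[of a] by (simp add: det2_def algebra_simps)
  qed
  have Unz: "U a \<noteq> 0" for a using indep[of a] by (auto simp: det2_def)
  have "\<forall>i. \<exists>c. P i - P (i + n) = c *\<^sub>R U i"
  proof
    fix i
    have "det2 (P i - P (i + n)) (U i) = 0"
      using diags[rule_format, of i] Usym[of i] by (simp add: det2_def algebra_simps)
    then show "\<exists>c. P i - P (i + n) = c *\<^sub>R U i" using par_ex Unz by blast
  qed
  then obtain mu where mu: "\<And>i. P i - P (i + n) = mu i *\<^sub>R U i" by metis
  have mu_step: "mu (Suc i) = mu i" for i
  proof -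
    define c where "c = lam i + lam (i + n)"
    have "P (Suc i) - P (Suc i + n) - (P i - P (i + n)) = c *\<^sub>R (U (Suc i) - U i)"
      using sides[rule_format, of i] sides[rule_format, of "i + n"] e_sym[of i] unfolding c_def
      by (simp add: algebra_simps)
    hence eq: "mu (Suc i) *\<^sub>R U (Suc i) - mu i *\<^sub>R U i = c *\<^sub>R (U (Suc i) - U i)"
      using mu[of i] mu[of "Suc i"] by simp
    have "mu (Suc i) * det2 (U (Suc i)) (U i) = c * det2 (U (Suc i)) (U i)"
      using arg_cong[OF eq, of "\<lambda>x. det2 x (U i)"]
      by (simp add: det2_diff_left det2_scale_left det2_self algebra_simps)
    moreover have "det2 (U (Suc i)) (U i) \<noteq> 0" using indep[of i] det2_swap[of "U i"] by simp
    ultimately have 1: "mu (Suc i) = c" by simp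
    have "mu i * det2 (U i) (U (Suc i)) = c * det2 (U i) (U (Suc i))"
      using arg_cong[OF eq, of "\<lambda>x. det2 x (U (Suc i))"]
      by (simp add: det2_diff_left det2_scale_left det2_self algebra_simps)
    then have "mu i = c" using indep[of i] by simp
    with 1 show ?thesis by simp
  qed
  have mu_const: "mu i = mu 0" for i by (induction i) (auto simp: mu_step)
  show ?thesis
    unfolding constant_width_def N_def[symmetric]
  proof (intro exI allI impI)
    fix v assume dn1: "dual_norm (convex hull (U ` {..<N})) v = 1"
    define f where "f x = det2 x v" for x
    have "\<exists>i\<in>{..<N}. \<forall>j\<in>{..<N}. f (U j) \<le> f (U i)"
    proof -
      let ?M = "Max ((\<lambda>j. f (U j)) ` {..<N})"
      have "?M \<in> (\<lambda>j. f (U j)) ` {..<N}" using N4 by (intro Max_in) (auto simp: lessThan_empty_iff)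
      then obtain i where i1: "i < N" and i2: "f (U i) = ?M" by auto
      have "\<forall>j\<in>{..<N}. f (U j) \<le> ?M" by simp
      with i1 i2 show ?thesis by (metis lessThan_iff)
    qed
    then obtain i where iN: "i < N" and imax0: "\<forall>j<N. f (U j) \<le> f (U i)" by auto
    have Umax: "f (U j) \<le> f (U i)" for j
      using imax0[rule_format, of "j mod N"] Umod[of j] N4 by simp
    have "dual_norm (convex hull (U ` {..<N})) v = f (U i)"
      unfolding dual_norm_def f_def
      by (rule sup_hull) (use iN Umax in \<open>auto simp: f_def\<close>)
    with dn1 have fUi: "f (U i) = 1" by simp
    show "width (convex hull (P ` {..<N})) v = mu 0"
    proof -
      have edge: "f (U (Suc (i + k))) \<le> f (U (i + k))" if "k < n" for k
        using that
      proof (induction k)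
        case 0 then show ?case using Umax by simp
      next
        case (Suc k)
        define a where "a = i + k"
        define e where "e = U (Suc a) - U a"
        define e' where "e' = U (Suc (Suc a)) - U (Suc a)"
        define x where "x = U (i + n) - U (Suc a)"
        have fe: "f e \<le> 0" using Suc by (simp add: e_def a_def f_def det2_diff_left)
        show ?case
        proof (rule ccontr)
          assume "\<not> ?case"
          hence fe': "f e' > 0" by (simp add: e'_def a_def f_def det2_diff_left)
          have m1: "(i + n) mod N \<noteq> a mod N"
            using mod_neq[of "n - k" N a] Suc.prems N_def unfolding a_def by simp
          have "(Suc a + (n - k - 1)) mod N \<noteq> Suc a mod N"
            using mod_neq[of "n - k - 1" N "Suc a"] Suc.prems N_def by simp
          moreover have "Suc a + (n - k - 1) = i + n" using Suc.prems unfolding a_def by simp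
          ultimately have m2: "(i + n) mod N \<noteq> Suc a mod N" by simp
          have "det2 e (U (i + n) - U a) > 0" using ccw[OF m1 m2] by (simp add: e_def)
          moreover have "U (i + n) - U a = x + e" by (simp add: x_def e_def)
          ultimately have h1: "det2 e x > 0" by (simp add: det2_def algebra_simps)
          have h2: "det2 e' x \<ge> 0" using ccw0[of "Suc a" "i + n"] by (simp add: e'_def x_def)
          have "(a + 2) mod N \<noteq> a mod N" using mod_neq[of 2 N a] N4 by simp
          moreover have "(Suc a + 1) mod N \<noteq> Suc a mod N" using mod_neq[of 1 N "Suc a"] N4 by simp
          ultimately have "det2 e (U (Suc (Suc a)) - U a) > 0" using ccw[of "Suc (Suc a)" a]
            by (simp add: e_def)
          moreover have "det2 e (U (Suc (Suc a)) - U a) = det2 e e'"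
            by (simp add: e_def e'_def det2_def algebra_simps)
          ultimately have h3: "det2 e e' > 0" by simp
          have ident: "det2 e e' * f x = det2 x e' * f e + det2 e x * f e'"
            by (simp add: f_def det2_def algebra_simps)
          have "det2 x e' * f e \<ge> 0"
            using h2 fe det2_swap[of x e'] by (simp add: mult_nonneg_nonpos)
          moreover have "det2 e x * f e' > 0" using h1 fe' by simp
          ultimately have "det2 e e' * f x > 0" using ident by linarith
          hence fx: "f x > 0" using h3 by (simp add: zero_less_mult_iff)
          have "f (U (i + n)) = - f (U i)" using Usym[of i] by (simp add: f_def det2_neg_left)
          moreover have "f (U (Suc a + n)) = - f (U (Suc a))" using Usym[of "Suc a"] by (simp add: f_def det2_neg_left)
          moreover have "f (U (Suc a + n)) \<le> f (U i)" by (rule Umax)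
          ultimately have "f x \<le> 0" by (simp add: x_def f_def det2_diff_left)
          with fx show False by simp
        qed
      qed
      have dec: "\<forall>k<n. f (P (i + Suc k)) \<le> f (P (i + k))"
      proof (intro allI impI)
        fix k assume "k < n"
        have "f (P (Suc (i + k))) - f (P (i + k)) = lam (i + k) * (f (U (Suc (i + k))) - f (U (i + k)))"
          using sides[rule_format, of "i + k"] arg_cong[of _ _ f]
          by (simp add: f_def det2_diff_left det2_scale_left[symmetric] flip: det2_diff_left)
        moreover have "lam (i + k) * (f (U (Suc (i + k))) - f (U (i + k))) \<le> 0"
          using edge[OF \<open>k < n\<close>] lam_nonneg by (simp add: mult_nonneg_nonpos)
        ultimately show "f (P (i + Suc k)) \<le> f (P (i + k))" by simp
      qed
      have inc: "\<forall>k<n. - f (P (i + n + Suc k)) \<le> - f (P (i + n + k))"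
      proof (intro allI impI)
        fix k assume "k < n"
        have "f (P (Suc (i + k + n))) - f (P (i + k + n)) = lam (i + k + n) * (f (U (Suc (i + k + n))) - f (U (i + k + n)))"
          using sides[rule_format, of "i + k + n"] arg_cong[of _ _ f]
          by (simp add: f_def det2_diff_left det2_scale_left[symmetric] flip: det2_diff_left)
        also have "\<dots> = lam (i + k + n) * f (U (Suc (i + k + n)) - U (i + k + n))"
          by (simp add: f_def det2_diff_left)
        also have "\<dots> = lam (i + k + n) * f (- (U (Suc (i + k)) - U (i + k)))"
          by (simp only: e_sym)
        also have "\<dots> = - lam (i + k + n) * (f (U (Suc (i + k))) - f (U (i + k)))"
          by (simp add: f_def det2_neg_left det2_diff_left algebra_simps)
        finally have "f (P (Suc (i + k + n))) - f (P (i + k + n)) \<ge> 0"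
          using edge[OF \<open>k < n\<close>] lam_nonneg[rule_format, of "i + k + n"]
          by (simp add: mult_nonneg_nonpos)
        then show "- f (P (i + n + Suc k)) \<le> - f (P (i + n + k))" by (simp add: add_ac)
      qed
      have bounds: "f (P (i + n)) \<le> f (P j) \<and> f (P j) \<le> f (P i)" for j
      proof -
        obtain k where kN: "k < N" and Pk: "P j = P (i + k)"
        proof (cases "i \<le> j mod N")
          case True
          show ?thesis
            apply (rule that[of "j mod N - i"])
            using True iN N4 Pmod[of j] by (auto intro: less_imp_diff_less)
        next
          case False
          show ?thesis
            apply (rule that[of "j mod N + N - i"])
            using False iN N4 Pmod[of j] P_per N_def by auto
        qed
        show ?thesis
        proof (cases "k \<le> n")
          case True
          have "f (P (i + n)) \<le> f (P (i + k))"
            using mono_dec[OF dec, of k n] True by simp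
          moreover have "f (P (i + k)) \<le> f (P (i + 0))"
            using mono_dec[OF dec, of 0 k] True by simp
          ultimately show ?thesis using Pk by simp
        next
          case False
          define m where "m = k - n"
          have km: "i + k = i + n + m" using False m_def by simp
          have "- f (P (i + n + m)) \<le> - f (P (i + n + 0))"
            using mono_dec[OF inc, of 0 m] kN m_def N_def by simp
          moreover have "- f (P (i + n + n)) \<le> - f (P (i + n + m))"
            using mono_dec[OF inc, of m n] kN m_def N_def by simp
          moreover have "P (i + n + n) = P i" using P_per by (metis add.assoc mult_2)
          ultimately show ?thesis using Pk km by simp
        qed
      qed
      have s1: "support_fun (convex hull (P ` {..<N})) v = f (P i)"
        unfolding support_fun_def f_def
        by (rule sup_hull) (use iN bounds in \<open>auto simp: f_def\<close>)
      have "P (i + n) = P ((i + n) mod N)" by (rule Pmod)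
      hence Pin: "P (i + n) \<in> P ` {..<N}" using N4 by auto
      have s2: "support_fun (convex hull (P ` {..<N})) (- v) = - f (P (i + n))"
        unfolding support_fun_def
        by (subst sup_hull[OF Pin]) (use bounds in \<open>auto simp: f_def det2_neg_right\<close>)
      have "width (convex hull (P ` {..<N})) v = f (P i - P (i + n))"
        unfolding width_def s1 s2 by (simp add: f_def det2_diff_left)
      also have "\<dots> = mu i * f (U i)" by (simp add: mu f_def det2_scale_left)
      finally show ?thesis using fUi mu_const[of i] by simp
    qed
  qed
qed

end
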